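(* Let $S\le T_n$ be a transformation monoid and $G$ the normalizer of $S$ in $S_n$. If $a\in S$ is $\mathcal R$-related in $SG$ to an idempotent $e$ of $SG$, then $e\in S$ and $a$ is $\mathcal R$-related in $S$ to $e$.
   Context: A transformation monoid is a subsemigroup of $T_n$ containing the identity map; $G=\{g\in S_n:g^{-1}Sg=S\}$ and $SG=\{sg:s\in S,g\in G\}$, a semigroup. For a semigroup $U$, elements $a,b\in U$ are $\mathcal R$-related in $U$ if there exist $u,v\in U^1$ with $a=bu$ and $b=av$, where $U^1$ is $U$ with an identity adjoined. *)

theory Defs
  imports Main
begin

text \<open>Transformations of {0..<n} (the n-element set), extended by the identity
outside {0..<n} so that they are total functions nat => nat.\<close>
definition transf :: "nat \<Rightarrow> (nat \<Rightarrow> nat) \<Rightarrow> bool" where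
  "transf n f \<longleftrightarrow> (\<forall>x<n. f x < n) \<and> (\<forall>x\<ge>n. f x = x)"

definition Tn :: "nat \<Rightarrow> (nat \<Rightarrow> nat) set" where
  "Tn n = {f. transf n f}"

text \<open>Maps act on the right, as usual in semigroup theory: x(fg) = (xf)g.\<close>
definition tmult :: "(nat \<Rightarrow> nat) \<Rightarrow> (nat \<Rightarrow> nat) \<Rightarrow> (nat \<Rightarrow> nat)" where
  "tmult f g = g \<circ> f"

definition Sn :: "nat \<Rightarrow> (nat \<Rightarrow> nat) set" where
  "Sn n = {g \<in> Tn n. bij_betw g {..<n} {..<n}}"

definition transformation_monoid :: "nat \<Rightarrow> (nat \<Rightarrow> nat) set \<Rightarrow> bool" where
  "transformation_monoid n S \<longleftrightarrow> S \<subseteq> Tn n \<and> id \<in> S \<and>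
     (\<forall>a\<in>S. \<forall>b\<in>S. tmult a b \<in> S)"

text \<open>G = {g in S_n : g^-1 S g = S}; inverse taken in S_n (g is a bijection of nat).\<close>
definition normalizer :: "nat \<Rightarrow> (nat \<Rightarrow> nat) set \<Rightarrow> (nat \<Rightarrow> nat) set" where
  "normalizer n S = {g \<in> Sn n. (\<lambda>s. tmult (tmult (inv g) s) g) ` S = S}"

definition setprod :: "(nat \<Rightarrow> nat) set \<Rightarrow> (nat \<Rightarrow> nat) set \<Rightarrow> (nat \<Rightarrow> nat) set" where
  "setprod S G = {tmult s g | s g. s \<in> S \<and> g \<in> G}"

text \<open>Green's R-relation in U, with U^1 = U plus an adjoined identity.\<close>
definition R_rel :: "(nat \<Rightarrow> nat) set \<Rightarrow> (nat \<Rightarrow> nat) \<Rightarrow> (nat \<Rightarrow> nat) \<Rightarrow> bool" where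
  "R_rel U a b \<longleftrightarrow> a \<in> U \<and> b \<in> U \<and>
     (a = b \<or> (\<exists>u\<in>U. a = tmult b u)) \<and> (b = a \<or> (\<exists>v\<in>U. b = tmult a v))"

end

theory Submission
  imports Defs "HOL-Library.FuncSet"
begin

lemma finite_Tn: "finite (Tn n)"
proof -
  have "inj_on (\<lambda>f. restrict f {..<n}) (Tn n)"
  proof (rule inj_onI)
    fix f g assume f: "f \<in> Tn n" and g: "g \<in> Tn n"
      and eq: "restrict f {..<n} = restrict g {..<n}"
    show "f = g"
    proof
      fix x show "f x = g x"
      proof (cases "x < n")
        case True then show ?thesis using fun_cong[OF eq, of x] by simp
      next
        case False then show ?thesis using f g by (simp add: Tn_def transf_def)
      qed
    qed
  qed
  moreover have "(\<lambda>f. restrict f {..<n}) ` Tn n \<subseteq> {..<n} \<rightarrow>\<^sub>E {..<n}"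
  proof (rule image_subsetI)
    fix f assume "f \<in> Tn n"
    thus "restrict f {..<n} \<in> {..<n} \<rightarrow>\<^sub>E {..<n}"
      by (simp add: Tn_def transf_def restrict_PiE_iff)
  qed
  ultimately show ?thesis
    by (meson finite_PiE finite_lessThan finite_imageD finite_subset)
qed

lemma Sn_inj: assumes "h \<in> Sn n" shows "inj h"
proof (rule injI)
  fix x y assume eq: "h x = h y"
  have t: "transf n h" and b: "bij_betw h {..<n} {..<n}" using assms by (auto simp: Sn_def Tn_def)
  show "x = y"
  proof (cases "x < n"; cases "y < n")
    assume "x < n" "y < n" then show ?thesis using b eq by (auto simp: bij_betw_def inj_on_def)
  next
    assume "x < n" "\<not> y < n" then show ?thesis using t eq by (auto simp: transf_def)
  next
    assume "\<not> x < n" "y < n" then show ?thesis using t eq by (auto simp: transf_def)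
  next
    assume "\<not> x < n" "\<not> y < n" then show ?thesis using t eq by (auto simp: transf_def)
  qed
qed

lemma transf_comp: "transf n f \<Longrightarrow> transf n g \<Longrightarrow> transf n (f \<circ> g)"
  by (auto simp: transf_def)

lemma transf_pow: "transf n h \<Longrightarrow> transf n (h ^^ k)"
  by (induction k) (auto simp: transf_def)

lemma Sn_order: assumes "h \<in> Sn n" shows "\<exists>k>0. h ^^ k = id"
proof -
  have t: "transf n h" using assms by (simp add: Sn_def Tn_def)
  have "(\<lambda>i. h ^^ i) ` UNIV \<subseteq> Tn n" using transf_pow[OF t] by (auto simp: Tn_def)
  hence "finite ((\<lambda>i. h ^^ i) ` (UNIV::nat set))" using finite_Tn finite_subset by blast
  hence "\<not> inj (\<lambda>i. h ^^ i)" using finite_imageD infinite_UNIV_nat by blast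
  then obtain i j where ij: "h ^^ i = h ^^ j" "i \<noteq> j" by (auto simp: inj_def)
  then obtain i j where ij: "h ^^ i = h ^^ j" "i < j"
    by (metis linorder_neqE_nat)
  have "h ^^ j = h ^^ i \<circ> h ^^ (j - i)" using ij(2)
    by (metis funpow_add le_add_diff_inverse less_imp_le)
  hence "h ^^ i \<circ> h ^^ (j - i) = h ^^ i \<circ> id"
    using ij by simp
  moreover have "inj (h ^^ i)" using inj_fn Sn_inj[OF assms] by blast
  ultimately have "h ^^ (j - i) = id"
    by (metis fun.inj_map_strong inj_eq)
  thus ?thesis using ij(2) zero_less_diff by blast
qed

lemma key:
  assumes tm: "transformation_monoid n S" and x: "x \<in> S" and h: "h \<in> normalizer n S"
  shows "k \<ge> 1 \<Longrightarrow> \<exists>w\<in>S. (tmult x h) ^^ k = h ^^ k \<circ> w \<circ> x"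
proof (induction k rule: dec_induct)
  case base
  show ?case using tm by (intro bexI[of _ id]) (auto simp: tmult_def transformation_monoid_def)
next
  case (step k)
  then obtain w where w: "w \<in> S" "(tmult x h) ^^ k = h ^^ k \<circ> w \<circ> x" by blast
  have s: "w \<circ> x \<in> S" using tm w x unfolding transformation_monoid_def tmult_def by auto
  have hS: "h \<in> Sn n" and img: "(\<lambda>s. tmult (tmult (inv h) s) h) ` S = S"
    using h by (auto simp: normalizer_def)
  have "w \<circ> x \<in> (\<lambda>s. tmult (tmult (inv h) s) h) ` S" using s img by simp
  then obtain s0 where s0: "s0 \<in> S" "w \<circ> x = h \<circ> s0 \<circ> inv h"
    by (auto simp: tmult_def comp_assoc)
  have inj: "inj h" using Sn_inj[OF hS] .
  have "w \<circ> x \<circ> h = h \<circ> s0"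
    using s0(2) inj by (simp add: comp_assoc inv_o_cancel)
  have "(tmult x h) ^^ Suc k = h ^^ k \<circ> w \<circ> x \<circ> (h \<circ> x)"
    using w(2) by (simp add: funpow_Suc_right tmult_def comp_assoc del: funpow.simps)
  also have "\<dots> = h ^^ k \<circ> (w \<circ> x \<circ> h) \<circ> x" by (simp add: comp_assoc)
  also have "\<dots> = h ^^ Suc k \<circ> s0 \<circ> x"
    using \<open>w \<circ> x \<circ> h = h \<circ> s0\<close> by (simp add: funpow_Suc_right comp_assoc del: funpow.simps)
  finally show ?case using s0(1) by blast
qed

lemma idem_pow0: "e \<circ> e = e \<Longrightarrow> e ^^ Suc k = e"
  by (induction k) (auto simp: funpow_Suc_right simp del: funpow.simps)

lemma idem_pow: "e \<circ> e = e \<Longrightarrow> k \<ge> 1 \<Longrightarrow> e ^^ k = e"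
  using idem_pow0[of e "k - 1"] by simp

lemma main_aux:
  assumes tm: "transformation_monoid n S" and x: "x \<in> S" and h: "h \<in> normalizer n S"
    and idem: "tmult e e = e" and e: "e = tmult x h"
  shows "\<exists>w\<in>S. e = tmult x w"
proof -
  have "h \<in> Sn n" using h by (simp add: normalizer_def)
  then obtain k where k: "k > 0" "h ^^ k = id"
    using Sn_order by blast
  obtain w where w: "w \<in> S" "e ^^ k = h ^^ k \<circ> w \<circ> x"
    using key[OF tm x h, of k] k e by auto
  have "e ^^ k = e" using idem_pow[of e k] idem k by (simp add: tmult_def)
  thus ?thesis using w k by (auto simp: tmult_def)
qed

theorem lemma4p2:
  fixes n :: nat and S :: "(nat \<Rightarrow> nat) set" and a e :: "nat \<Rightarrow> nat"
  assumes "transformation_monoid n S"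
    and "a \<in> S"
    and "e \<in> setprod S (normalizer n S)"
    and "tmult e e = e"
    and "R_rel (setprod S (normalizer n S)) a e"
  shows "e \<in> S \<and> R_rel S a e"
proof -
  note tm = assms(1)
  have cl: "\<And>p q. p \<in> S \<Longrightarrow> q \<in> S \<Longrightarrow> tmult p q \<in> S"
    using tm by (simp add: transformation_monoid_def)
  have assoc: "\<And>p q r. tmult (tmult p q) r = tmult p (tmult q r)"
    by (simp add: tmult_def comp_assoc)
  have ex: "\<exists>w\<in>S. e = tmult a w"
  proof (cases "e = a")
    case True
    then show ?thesis using tm by (intro bexI[of _ id]) (auto simp: tmult_def transformation_monoid_def)
  next
    case False
    then obtain v where v: "v \<in> setprod S (normalizer n S)" "e = tmult a v"
      using assms(5) by (auto simp: R_rel_def)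
    then obtain t h where th: "t \<in> S" "h \<in> normalizer n S" "v = tmult t h"
      by (auto simp: setprod_def)
    have "e = tmult (tmult a t) h" using v th assoc by simp
    then obtain w where "w \<in> S" "e = tmult (tmult a t) w"
      using main_aux[OF tm cl[OF assms(2) th(1)] th(2) assms(4)] by blast
    thus ?thesis using cl th(1) assoc by metis
  qed
  then obtain w where w: "w \<in> S" "e = tmult a w" by blast
  have eS: "e \<in> S" using cl[OF assms(2) w(1)] w(2) by simp
  have "a = tmult e a"
  proof (cases "a = e")
    case True then show ?thesis using assms(4) by simp
  next
    case False
    then obtain u where "a = tmult e u" using assms(5) by (auto simp: R_rel_def)
    thus ?thesis using assms(4) assoc by metis
  qed
  thus ?thesis using eS assms(2) w by (auto simp: R_rel_def)
qed

end
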